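(* Let $(V,L,\varphi,E)$ and $(V,C,\psi,E)$ be valuation systems such that $\psi$ extends $\varphi$. Then for every ordinal number $\alpha$: if $\psi$ is $\Pi_\alpha$-extendible, then $\varphi$ is $\Pi_\alpha$-extendible and $\Pi_\alpha\psi$ extends $\Pi_\alpha\varphi$; and if $\psi$ is $\Sigma_\alpha$-extendible, then $\varphi$ is $\Sigma_\alpha$-extendible and $\Sigma_\alpha\psi$ extends $\Sigma_\alpha\varphi$.
   Context: A valuation system $(V,L,\varphi,E)$ consists of: (i) a lattice $V$ which is $\sigma$-distributive (for every $a\in V$ and sequence $(b_n)$ with existing infimum, $\bigwedge_n(a\vee b_n)$ exists and equals $a\vee\bigwedge_n b_n$, and dually for suprema); (ii) a sublattice $L$ of $V$; (iii) a partially ordered abelian group $E$ which is R-complete (whenever $x_1\ge x_2\ge\cdots$ and $y_1\ge y_2\ge\cdots$ in $E$ are such that $\bigwedge_n(x_n+y_n)$ exists, $\bigwedge_n x_n$ and $\bigwedge_n y_n$ exist; dually for increasing sequences); (iv) a valuation $\varphi:L\to E$ (order-preserving, $\varphi(a\wedge b)+\varphi(a\vee b)=\varphi(a)+\varphi(b)$). A map $\psi:C\to E$ extends $\varphi:L\to E$ if $L\subseteq C$ and $\psi|_L=\varphi$. A decreasing (resp. increasing) sequence $(a_n)$ in $L$ is $\varphi$-convergent if $\bigwedge_n a_n$ exists in $V$ and $\bigwedge_n\varphi(a_n)$ exists in $E$ (resp. with suprema). $\Pi L:=\{\bigwedge_n a_n:(a_n)\ \varphi\text{-convergent decreasing}\}$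 and $\varphi$ is $\Pi$-extendible if there is a valuation $\Pi\varphi:\Pi L\to E$ with $\Pi\varphi(\bigwedge_n a_n)=\bigwedge_n\varphi(a_n)$ for all such sequences; $\Sigma L,\Sigma$-extendible, $\Sigma\varphi$ dually. Hierarchy (transfinite recursion): $\varphi$ is $\Pi_0$- and $\Sigma_0$-extendible with $\Pi_0\varphi=\Sigma_0\varphi=\varphi$; $\varphi$ is $\Pi_{\alpha+1}$-extendible iff it is $\Sigma_\alpha$-extendible and $\Sigma_\alpha\varphi$ is $\Pi$-extendible, with $\Pi_{\alpha+1}\varphi=\Pi(\Sigma_\alpha\varphi)$; $\varphi$ is $\Sigma_{\alpha+1}$-extendible iff it is $\Pi_\alpha$-extendible and $\Pi_\alpha\varphi$ is $\Sigma$-extendible, with $\Sigma_{\alpha+1}\varphi=\Sigma(\Pi_\alpha\varphi)$; at a limit $\lambda$, $\varphi$ is $\Pi_\lambda$-extendible iff $\Pi_\alpha$-extendible for all $\alpha<\lambda$, and then $\Pi_\lambda\varphi$ is the common extension of the $\Pi_\alpha\varphi$ ($\alpha<\lambda$) on $\bigcup_{\alpha<\lambda}\Pi_\alpha L$; similarly for $\Sigma_\lambda$. The same definitions apply to $\psi$. *)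

theory Defs
  imports Main
begin

definition is_glb :: "'a::order set \<Rightarrow> 'a \<Rightarrow> bool" where
  "is_glb S x \<longleftrightarrow> (\<forall>y\<in>S. x \<le> y) \<and> (\<forall>z. (\<forall>y\<in>S. z \<le> y) \<longrightarrow> z \<le> x)"

definition is_lub :: "'a::order set \<Rightarrow> 'a \<Rightarrow> bool" where
  "is_lub S x \<longleftrightarrow> (\<forall>y\<in>S. y \<le> x) \<and> (\<forall>z. (\<forall>y\<in>S. y \<le> z) \<longrightarrow> x \<le> z)"

text \<open>The lattice V is the whole type 'v; sigma-distributivity of V.\<close>
definition sigma_distributive :: "('v::lattice) itself \<Rightarrow> bool" where
  "sigma_distributive (T :: 'v itself) \<longleftrightarrow>
     (\<forall>(a::'v) (b::nat \<Rightarrow> 'v) x. is_glb (range b) x \<longrightarrow> is_glb (range (\<lambda>n. sup a (b n))) (sup a x)) \<and>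
     (\<forall>(a::'v) (b::nat \<Rightarrow> 'v) x. is_lub (range b) x \<longrightarrow> is_lub (range (\<lambda>n. inf a (b n))) (inf a x))"

definition R_complete :: "('e::ordered_ab_group_add) itself \<Rightarrow> bool" where
  "R_complete (T :: 'e itself) \<longleftrightarrow>
     (\<forall>x y :: nat \<Rightarrow> 'e. antimono x \<and> antimono y \<and> (\<exists>s. is_glb (range (\<lambda>n. x n + y n)) s)
        \<longrightarrow> (\<exists>s. is_glb (range x) s) \<and> (\<exists>s. is_glb (range y) s)) \<and>
     (\<forall>x y :: nat \<Rightarrow> 'e. mono x \<and> mono y \<and> (\<exists>s. is_lub (range (\<lambda>n. x n + y n)) s)
        \<longrightarrow> (\<exists>s. is_lub (range x) s) \<and> (\<exists>s. is_lub (range y) s))"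

definition sublattice :: "'v::lattice set \<Rightarrow> bool" where
  "sublattice L \<longleftrightarrow> (\<forall>a\<in>L. \<forall>b\<in>L. inf a b \<in> L \<and> sup a b \<in> L)"

definition valuation :: "'v::lattice set \<Rightarrow> ('v \<Rightarrow> 'e::ordered_ab_group_add) \<Rightarrow> bool" where
  "valuation L \<phi> \<longleftrightarrow> sublattice L \<and>
     (\<forall>a\<in>L. \<forall>b\<in>L. a \<le> b \<longrightarrow> \<phi> a \<le> \<phi> b) \<and>
     (\<forall>a\<in>L. \<forall>b\<in>L. \<phi> (inf a b) + \<phi> (sup a b) = \<phi> a + \<phi> b)"

definition valuation_system :: "'v::lattice set \<Rightarrow> ('v \<Rightarrow> 'e::ordered_ab_group_add) \<Rightarrow> bool" where
  "valuation_system L \<phi> \<longleftrightarrow>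
     sigma_distributive TYPE('v) \<and> sublattice L \<and> R_complete TYPE('e) \<and> valuation L \<phi>"

definition extends :: "'v set \<Rightarrow> ('v \<Rightarrow> 'e) \<Rightarrow> 'v set \<Rightarrow> ('v \<Rightarrow> 'e) \<Rightarrow> bool" where
  "extends C \<psi> L \<phi> \<longleftrightarrow> L \<subseteq> C \<and> (\<forall>x\<in>L. \<psi> x = \<phi> x)"

definition phi_conv_dec :: "'v::lattice set \<Rightarrow> ('v \<Rightarrow> 'e::ordered_ab_group_add) \<Rightarrow> (nat \<Rightarrow> 'v) \<Rightarrow> bool" where
  "phi_conv_dec L \<phi> a \<longleftrightarrow> (\<forall>n. a n \<in> L) \<and> antimono a \<and>
     (\<exists>x. is_glb (range a) x) \<and> (\<exists>s. is_glb (range (\<lambda>n. \<phi> (a n))) s)"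

definition phi_conv_inc :: "'v::lattice set \<Rightarrow> ('v \<Rightarrow> 'e::ordered_ab_group_add) \<Rightarrow> (nat \<Rightarrow> 'v) \<Rightarrow> bool" where
  "phi_conv_inc L \<phi> a \<longleftrightarrow> (\<forall>n. a n \<in> L) \<and> mono a \<and>
     (\<exists>x. is_lub (range a) x) \<and> (\<exists>s. is_lub (range (\<lambda>n. \<phi> (a n))) s)"

definition PiL :: "'v::lattice set \<Rightarrow> ('v \<Rightarrow> 'e::ordered_ab_group_add) \<Rightarrow> 'v set" where
  "PiL L \<phi> = {x. \<exists>a. phi_conv_dec L \<phi> a \<and> is_glb (range a) x}"

definition SigmaL :: "'v::lattice set \<Rightarrow> ('v \<Rightarrow> 'e::ordered_ab_group_add) \<Rightarrow> 'v set" where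
  "SigmaL L \<phi> = {x. \<exists>a. phi_conv_inc L \<phi> a \<and> is_lub (range a) x}"

definition Pi_extendible :: "'v::lattice set \<Rightarrow> ('v \<Rightarrow> 'e::ordered_ab_group_add) \<Rightarrow> bool" where
  "Pi_extendible L \<phi> \<longleftrightarrow> (\<exists>f. valuation (PiL L \<phi>) f \<and>
     (\<forall>a x s. phi_conv_dec L \<phi> a \<and> is_glb (range a) x \<and> is_glb (range (\<lambda>n. \<phi> (a n))) s
        \<longrightarrow> f x = s))"

definition Sigma_extendible :: "'v::lattice set \<Rightarrow> ('v \<Rightarrow> 'e::ordered_ab_group_add) \<Rightarrow> bool" where
  "Sigma_extendible L \<phi> \<longleftrightarrow> (\<exists>f. valuation (SigmaL L \<phi>) f \<and>
     (\<forall>a x s. phi_conv_inc L \<phi> a \<and> is_lub (range a) x \<and> is_lub (range (\<lambda>n. \<phi> (a n))) s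
        \<longrightarrow> f x = s))"

text \<open>The extension itself (meaningful on PiL L phi when phi is Pi-extendible).\<close>
definition Pi_fun :: "'v::lattice set \<Rightarrow> ('v \<Rightarrow> 'e::ordered_ab_group_add) \<Rightarrow> 'v \<Rightarrow> 'e" where
  "Pi_fun L \<phi> x = (SOME s. \<exists>a. phi_conv_dec L \<phi> a \<and> is_glb (range a) x \<and>
                               is_glb (range (\<lambda>n. \<phi> (a n))) s)"

definition Sigma_fun :: "'v::lattice set \<Rightarrow> ('v \<Rightarrow> 'e::ordered_ab_group_add) \<Rightarrow> 'v \<Rightarrow> 'e" where
  "Sigma_fun L \<phi> x = (SOME s. \<exists>a. phi_conv_inc L \<phi> a \<and> is_lub (range a) x \<and>
                                  is_lub (range (\<lambda>n. \<phi> (a n))) s)"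

definition step_ext :: "bool \<Rightarrow> 'v::lattice set \<Rightarrow> ('v \<Rightarrow> 'e::ordered_ab_group_add) \<Rightarrow> bool" where
  "step_ext b M f = (if b then Pi_extendible M f else Sigma_extendible M f)"

definition step_dom :: "bool \<Rightarrow> 'v::lattice set \<Rightarrow> ('v \<Rightarrow> 'e::ordered_ab_group_add) \<Rightarrow> 'v set" where
  "step_dom b M f = (if b then PiL M f else SigmaL M f)"

definition step_fun :: "bool \<Rightarrow> 'v::lattice set \<Rightarrow> ('v \<Rightarrow> 'e::ordered_ab_group_add) \<Rightarrow> 'v \<Rightarrow> 'e" where
  "step_fun b M f = (if b then Pi_fun M f else Sigma_fun M f)"

section \<open>Ordinals, represented as elements of a well-ordered type\<close>

definition is_zero :: "'o::wellorder \<Rightarrow> bool" where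
  "is_zero \<alpha> \<longleftrightarrow> (\<forall>\<gamma>. \<alpha> \<le> \<gamma>)"

definition is_succ_of :: "'o::wellorder \<Rightarrow> 'o \<Rightarrow> bool" where
  "is_succ_of \<beta> \<alpha> \<longleftrightarrow> \<beta> < \<alpha> \<and> (\<forall>\<gamma>. \<beta> < \<gamma> \<longrightarrow> \<alpha> \<le> \<gamma>)"

definition is_limit :: "'o::wellorder \<Rightarrow> bool" where
  "is_limit \<alpha> \<longleftrightarrow> \<not> is_zero \<alpha> \<and> \<not> (\<exists>\<beta>. is_succ_of \<beta> \<alpha>)"

text \<open>hier L phi b alpha M f: phi is Pi_alpha-extendible (b = True) resp. Sigma_alpha-extendible
  (b = False), with Pi_alpha L = M (resp. Sigma_alpha L = M) and Pi_alpha phi = f on M.\<close>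
inductive hier :: "'v::lattice set \<Rightarrow> ('v \<Rightarrow> 'e::ordered_ab_group_add) \<Rightarrow> bool \<Rightarrow> 'o::wellorder
                    \<Rightarrow> 'v set \<Rightarrow> ('v \<Rightarrow> 'e) \<Rightarrow> bool"
  for L :: "'v::lattice set" and \<phi> :: "'v \<Rightarrow> 'e::ordered_ab_group_add"
where
  zero: "is_zero \<alpha> \<Longrightarrow> hier L \<phi> b \<alpha> L \<phi>"
| succ: "is_succ_of \<beta> \<alpha> \<Longrightarrow> hier L \<phi> (\<not> b) \<beta> M f \<Longrightarrow> step_ext b M f \<Longrightarrow>
         hier L \<phi> b \<alpha> (step_dom b M f) (step_fun b M f)"
| limit: "is_limit \<alpha> \<Longrightarrow> (\<forall>\<beta><\<alpha>. hier L \<phi> b \<beta> (Ms \<beta>) (fs \<beta>)) \<Longrightarrow>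
          M = (\<Union>\<beta>\<in>{\<beta>. \<beta> < \<alpha>}. Ms \<beta>) \<Longrightarrow>
          (\<forall>\<beta><\<alpha>. \<forall>x\<in>Ms \<beta>. f x = fs \<beta> x) \<Longrightarrow> hier L \<phi> b \<alpha> M f"

definition Pi_alpha_extendible :: "'v::lattice set \<Rightarrow> ('v \<Rightarrow> 'e::ordered_ab_group_add) \<Rightarrow> 'o::wellorder \<Rightarrow> bool" where
  "Pi_alpha_extendible L \<phi> \<alpha> \<longleftrightarrow> (\<exists>M f. hier L \<phi> True \<alpha> M f)"

definition Sigma_alpha_extendible :: "'v::lattice set \<Rightarrow> ('v \<Rightarrow> 'e::ordered_ab_group_add) \<Rightarrow> 'o::wellorder \<Rightarrow> bool" where
  "Sigma_alpha_extendible L \<phi> \<alpha> \<longleftrightarrow> (\<exists>M f. hier L \<phi> False \<alpha> M f)"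

end

theory Submission
  imports Defs
begin


lemma glb_unique: "is_glb S x \<Longrightarrow> is_glb S y \<Longrightarrow> x = y"
  unfolding is_glb_def by (blast intro: antisym)

lemma lub_unique: "is_lub S x \<Longrightarrow> is_lub S y \<Longrightarrow> x = y"
  unfolding is_lub_def by (blast intro: antisym)

lemma glb_const: "is_glb (range (\<lambda>n. c)) c"
  unfolding is_glb_def by auto

lemma lub_const: "is_lub (range (\<lambda>n. c)) c"
  unfolding is_lub_def by auto

lemma valuation_cong:
  assumes "valuation M F" "\<forall>x\<in>M. G x = F x"
  shows "valuation M G"
  using assms unfolding valuation_def sublattice_def by auto

lemma valuation_subset:
  assumes "valuation M F" "sublattice N" "N \<subseteq> M"
  shows "valuation N F"
  using assms unfolding valuation_def by blast

lemma glb_sum: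
  fixes u v :: "nat \<Rightarrow> 'e::ordered_ab_group_add"
  assumes au: "antimono u" and av: "antimono v" and gu: "is_glb (range u) s" and gv: "is_glb (range v) t"
  shows "is_glb (range (\<lambda>n. u n + v n)) (s + t)"
  unfolding is_glb_def
proof safe
  fix n show "s + t \<le> u n + v n"
    using gu gv unfolding is_glb_def by (auto intro: add_mono)
next
  fix z assume H: "\<forall>y\<in>range (\<lambda>n. u n + v n). z \<le> y"
  have 1: "z - v n \<le> u m" for m n
  proof -
    let ?k = "max m n"
    have "z \<le> u ?k + v ?k" using H by auto
    also have "\<dots> \<le> u m + v n"
      using au av unfolding antimono_def by (auto intro: add_mono)
    finally show ?thesis by (simp add: diff_le_eq)
  qed
  have 2: "z - v n \<le> s" for n using gu 1 unfolding is_glb_def by auto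
  have 3: "z - s \<le> v n" for n using 2[of n] by (simp add: diff_le_eq le_diff_eq add.commute)
  have "z - s \<le> t" using gv 3 unfolding is_glb_def by auto
  then show "z \<le> s + t" by (simp add: diff_le_eq add.commute)
qed

lemma lub_sum:
  fixes u v :: "nat \<Rightarrow> 'e::ordered_ab_group_add"
  assumes au: "mono u" and av: "mono v" and gu: "is_lub (range u) s" and gv: "is_lub (range v) t"
  shows "is_lub (range (\<lambda>n. u n + v n)) (s + t)"
  unfolding is_lub_def
proof safe
  fix n show "u n + v n \<le> s + t"
    using gu gv unfolding is_lub_def by (auto intro: add_mono)
next
  fix z assume H: "\<forall>y\<in>range (\<lambda>n. u n + v n). y \<le> z"
  have 1: "u m \<le> z - v n" for m n
  proof -
    let ?k = "max m n"
    have "u m + v n \<le> u ?k + v ?k"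
      using au av unfolding mono_def by (auto intro: add_mono)
    also have "\<dots> \<le> z" using H by auto
    finally show ?thesis by (simp add: le_diff_eq)
  qed
  have 2: "s \<le> z - v n" for n using gu 1 unfolding is_lub_def by auto
  have 3: "v n \<le> z - s" for n using 2[of n] by (simp add: diff_le_eq le_diff_eq add.commute)
  have "t \<le> z - s" using gv 3 unfolding is_lub_def by auto
  then show "s + t \<le> z" by (simp add: le_diff_eq add.commute)
qed

lemma glb_sup_seq:
  assumes sd: "sigma_distributive TYPE('v::lattice)"
    and aa: "antimono (a::nat\<Rightarrow>'v)" and ab: "antimono b"
    and ga: "is_glb (range a) x" and gb: "is_glb (range (b::nat\<Rightarrow>'v)) (y::'v)"
  shows "is_glb (range (\<lambda>n. sup (a n) (b n))) (sup x y)"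
  unfolding is_glb_def
proof safe
  fix n have "x \<le> a n" "y \<le> b n" using ga gb unfolding is_glb_def by auto
  then show "sup x y \<le> sup (a n) (b n)" by (rule sup_mono)
next
  fix z assume H: "\<forall>w\<in>range (\<lambda>n. sup (a n) (b n)). z \<le> w"
  have d1: "is_glb (range (\<lambda>n. sup u (b n))) (sup u y)" for u
    using sd gb unfolding sigma_distributive_def by blast
  have d2: "is_glb (range (\<lambda>n. sup u (a n))) (sup u x)" for u
    using sd unfolding sigma_distributive_def using ga by auto
  have 1: "z \<le> sup (a m) (b n)" for m n
  proof -
    let ?k = "max m n"
    have "z \<le> sup (a ?k) (b ?k)" using H by auto
    also have "\<dots> \<le> sup (a m) (b n)"
    proof (rule sup_mono)
      show "a ?k \<le> a m" using aa unfolding antimono_def by auto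
      show "b ?k \<le> b n" using ab unfolding antimono_def by auto
    qed
    finally show ?thesis .
  qed
  have 2: "z \<le> sup y (a m)" for m
    using d1[of "a m"] 1[of m] unfolding is_glb_def by (auto simp: sup_commute)
  show "z \<le> sup x y" using d2[of y] 2 unfolding is_glb_def by (auto simp: sup_commute)
qed

lemma lub_inf_seq:
  assumes sd: "sigma_distributive TYPE('v::lattice)"
    and aa: "mono a" and ab: "mono b"
    and ga: "is_lub (range (a::nat\<Rightarrow>'v)) x" and gb: "is_lub (range (b::nat\<Rightarrow>'v)) (y::'v)"
  shows "is_lub (range (\<lambda>n. inf (a n) (b n))) (inf x y)"
  unfolding is_lub_def
proof safe
  fix n have "a n \<le> x" "b n \<le> y" using ga gb unfolding is_lub_def by auto
  then show "inf (a n) (b n) \<le> inf x y" by (rule inf_mono)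
next
  fix z assume H: "\<forall>w\<in>range (\<lambda>n. inf (a n) (b n)). w \<le> z"
  have d1: "is_lub (range (\<lambda>n. inf u (b n))) (inf u y)" for u
    using sd gb unfolding sigma_distributive_def by blast
  have d2: "is_lub (range (\<lambda>n. inf u (a n))) (inf u x)" for u
    using sd unfolding sigma_distributive_def using ga by auto
  have 1: "inf (a m) (b n) \<le> z" for m n
  proof -
    let ?k = "max m n"
    have "inf (a m) (b n) \<le> inf (a ?k) (b ?k)"
    proof (rule inf_mono)
      show "a m \<le> a ?k" using aa unfolding mono_def by auto
      show "b n \<le> b ?k" using ab unfolding mono_def by auto
    qed
    also have "\<dots> \<le> z" using H by auto
    finally show ?thesis .
  qed
  have 2: "inf y (a m) \<le> z" for m
    using d1[of "a m"] 1[of m] unfolding is_lub_def by (auto simp: inf_commute)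
  show "inf x y \<le> z" using d2[of y] 2 unfolding is_lub_def by (auto simp: inf_commute)
qed

lemma glb_inf_seq:
  assumes ga: "is_glb (range a) x" and gb: "is_glb (range b) (y::'v::lattice)"
  shows "is_glb (range (\<lambda>n. inf (a n) (b n))) (inf x y)"
  using assms unfolding is_glb_def by (auto intro: inf_mono le_infI1 le_infI2)

lemma lub_sup_seq:
  assumes ga: "is_lub (range a) x" and gb: "is_lub (range b) (y::'v::lattice)"
  shows "is_lub (range (\<lambda>n. sup (a n) (b n))) (sup x y)"
  using assms unfolding is_lub_def by (auto intro: sup_mono le_supI1 le_supI2)



lemma PiL_sublattice:
  fixes N :: "'v::lattice set" and g :: "'v \<Rightarrow> 'e::ordered_ab_group_add"
  assumes sd: "sigma_distributive TYPE('v)" and rc: "R_complete TYPE('e)"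
    and val: "valuation N g"
  shows "sublattice (PiL N g)"
  unfolding sublattice_def
proof (intro ballI conjI)
  fix x y assume "x \<in> PiL N g" "y \<in> PiL N g"
  then obtain a b where a: "phi_conv_dec N g a" "is_glb (range a) x"
    and b: "phi_conv_dec N g b" "is_glb (range b) y" unfolding PiL_def by auto
  obtain s t where s: "is_glb (range (\<lambda>n. g (a n))) s" and t: "is_glb (range (\<lambda>n. g (b n))) t"
    using a b unfolding phi_conv_dec_def by auto
  have aN: "\<And>n. a n \<in> N" and bN: "\<And>n. b n \<in> N" and aa: "antimono a" and ab: "antimono b"
    using a b unfolding phi_conv_dec_def by auto
  have subl: "sublattice N" and gmono: "\<And>u v. u \<in> N \<Longrightarrow> v \<in> N \<Longrightarrow> u \<le> v \<Longrightarrow> g u \<le> g v"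
    and gmod: "\<And>u v. u \<in> N \<Longrightarrow> v \<in> N \<Longrightarrow> g (inf u v) + g (sup u v) = g u + g v"
    using val unfolding valuation_def by auto
  define c where "c = (\<lambda>n. sup (a n) (b n))"
  define d where "d = (\<lambda>n. inf (a n) (b n))"
  have cN: "\<And>n. c n \<in> N" and dN: "\<And>n. d n \<in> N"
    using subl aN bN unfolding sublattice_def c_def d_def by auto
  have ac: "antimono c" unfolding c_def antimono_def
  proof (intro allI impI)
    fix m n :: nat assume "m \<le> n"
    then have "a n \<le> a m" "b n \<le> b m" using aa ab unfolding antimono_def by auto
    then show "sup (a n) (b n) \<le> sup (a m) (b m)" by (rule sup_mono)
  qed
  have ad: "antimono d" unfolding d_def antimono_def
  proof (intro allI impI)
    fix m n :: nat assume "m \<le> n"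
    then have "a n \<le> a m" "b n \<le> b m" using aa ab unfolding antimono_def by auto
    then show "inf (a n) (b n) \<le> inf (a m) (b m)" by (rule inf_mono)
  qed
  have agc: "antimono (\<lambda>n. g (c n))" using ac cN gmono unfolding antimono_def by auto
  have agd: "antimono (\<lambda>n. g (d n))" using ad dN gmono unfolding antimono_def by auto
  have aga: "antimono (\<lambda>n. g (a n))" using aa aN gmono unfolding antimono_def by auto
  have agb: "antimono (\<lambda>n. g (b n))" using ab bN gmono unfolding antimono_def by auto
  have eq: "(\<lambda>n. g (d n) + g (c n)) = (\<lambda>n. g (a n) + g (b n))"
    unfolding c_def d_def using gmod aN bN by auto
  have "is_glb (range (\<lambda>n. g (d n) + g (c n))) (s + t)" unfolding eq by (rule glb_sum[OF aga agb s t])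
  then have "\<exists>s. is_glb (range (\<lambda>n. g (d n) + g (c n))) s" by blast
  then have ex: "(\<exists>s. is_glb (range (\<lambda>n. g (d n))) s) \<and> (\<exists>s. is_glb (range (\<lambda>n. g (c n))) s)"
    using rc agc agd unfolding R_complete_def by blast
  have gc: "is_glb (range c) (sup x y)" unfolding c_def by (rule glb_sup_seq[OF sd aa ab a(2) b(2)])
  have gd: "is_glb (range d) (inf x y)" unfolding d_def by (rule glb_inf_seq[OF a(2) b(2)])
  have "phi_conv_dec N g c" "phi_conv_dec N g d"
    unfolding phi_conv_dec_def using cN dN ac ad ex gc gd by auto
  then show "inf x y \<in> PiL N g" "sup x y \<in> PiL N g"
    unfolding PiL_def using gc gd by auto
qed

lemma SigmaL_sublattice:
  fixes N :: "'v::lattice set" and g :: "'v \<Rightarrow> 'e::ordered_ab_group_add"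
  assumes sd: "sigma_distributive TYPE('v)" and rc: "R_complete TYPE('e)"
    and val: "valuation N g"
  shows "sublattice (SigmaL N g)"
  unfolding sublattice_def
proof (intro ballI conjI)
  fix x y assume "x \<in> SigmaL N g" "y \<in> SigmaL N g"
  then obtain a b where a: "phi_conv_inc N g a" "is_lub (range a) x"
    and b: "phi_conv_inc N g b" "is_lub (range b) y" unfolding SigmaL_def by auto
  obtain s t where s: "is_lub (range (\<lambda>n. g (a n))) s" and t: "is_lub (range (\<lambda>n. g (b n))) t"
    using a b unfolding phi_conv_inc_def by auto
  have aN: "\<And>n. a n \<in> N" and bN: "\<And>n. b n \<in> N" and aa: "mono a" and ab: "mono b"
    using a b unfolding phi_conv_inc_def by auto
  have subl: "sublattice N" and gmono: "\<And>u v. u \<in> N \<Longrightarrow> v \<in> N \<Longrightarrow> u \<le> v \<Longrightarrow> g u \<le> g v"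
    and gmod: "\<And>u v. u \<in> N \<Longrightarrow> v \<in> N \<Longrightarrow> g (inf u v) + g (sup u v) = g u + g v"
    using val unfolding valuation_def by auto
  define c where "c = (\<lambda>n. sup (a n) (b n))"
  define d where "d = (\<lambda>n. inf (a n) (b n))"
  have cN: "\<And>n. c n \<in> N" and dN: "\<And>n. d n \<in> N"
    using subl aN bN unfolding sublattice_def c_def d_def by auto
  have ac: "mono c" unfolding c_def mono_def
  proof (intro allI impI)
    fix m n :: nat assume "m \<le> n"
    then have "a m \<le> a n" "b m \<le> b n" using aa ab unfolding mono_def by auto
    then show "sup (a m) (b m) \<le> sup (a n) (b n)" by (rule sup_mono)
  qed
  have ad: "mono d" unfolding d_def mono_def
  proof (intro allI impI)
    fix m n :: nat assume "m \<le> n"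
    then have "a m \<le> a n" "b m \<le> b n" using aa ab unfolding mono_def by auto
    then show "inf (a m) (b m) \<le> inf (a n) (b n)" by (rule inf_mono)
  qed
  have agc: "mono (\<lambda>n. g (c n))" using ac cN gmono unfolding mono_def by auto
  have agd: "mono (\<lambda>n. g (d n))" using ad dN gmono unfolding mono_def by auto
  have aga: "mono (\<lambda>n. g (a n))" using aa aN gmono unfolding mono_def by auto
  have agb: "mono (\<lambda>n. g (b n))" using ab bN gmono unfolding mono_def by auto
  have eq: "(\<lambda>n. g (d n) + g (c n)) = (\<lambda>n. g (a n) + g (b n))"
    unfolding c_def d_def using gmod aN bN by auto
  have "is_lub (range (\<lambda>n. g (d n) + g (c n))) (s + t)" unfolding eq by (rule lub_sum[OF aga agb s t])
  then have "\<exists>s. is_lub (range (\<lambda>n. g (d n) + g (c n))) s" by blast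
  then have ex: "(\<exists>s. is_lub (range (\<lambda>n. g (d n))) s) \<and> (\<exists>s. is_lub (range (\<lambda>n. g (c n))) s)"
    using rc agc agd unfolding R_complete_def by blast
  have gc: "is_lub (range c) (sup x y)" unfolding c_def by (rule lub_sup_seq[OF a(2) b(2)])
  have gd: "is_lub (range d) (inf x y)" unfolding d_def by (rule lub_inf_seq[OF sd aa ab a(2) b(2)])
  have "phi_conv_inc N g c" "phi_conv_inc N g d"
    unfolding phi_conv_inc_def using cN dN ac ad ex gc gd by auto
  then show "inf x y \<in> SigmaL N g" "sup x y \<in> SigmaL N g"
    unfolding SigmaL_def using gc gd by auto
qed



lemma conv_dec_transfer:
  assumes "phi_conv_dec N g a" "N \<subseteq> M" "\<forall>x\<in>N. g x = f x"
  shows "phi_conv_dec M f a" "(\<lambda>n. g (a n)) = (\<lambda>n. f (a n))"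
proof -
  have "\<forall>n. a n \<in> N" using assms(1) unfolding phi_conv_dec_def by auto
  then show eq: "(\<lambda>n. g (a n)) = (\<lambda>n. f (a n))" using assms(3) by auto
  show "phi_conv_dec M f a" using assms unfolding phi_conv_dec_def eq by auto
qed

lemma conv_inc_transfer:
  assumes "phi_conv_inc N g a" "N \<subseteq> M" "\<forall>x\<in>N. g x = f x"
  shows "phi_conv_inc M f a" "(\<lambda>n. g (a n)) = (\<lambda>n. f (a n))"
proof -
  have "\<forall>n. a n \<in> N" using assms(1) unfolding phi_conv_inc_def by auto
  then show eq: "(\<lambda>n. g (a n)) = (\<lambda>n. f (a n))" using assms(3) by auto
  show "phi_conv_inc M f a" using assms unfolding phi_conv_inc_def eq by auto
qed

lemma Pi_fun_eq:
  assumes P: "\<forall>a x s. phi_conv_dec M f a \<and> is_glb (range a) x \<and> is_glb (range (\<lambda>n. f (a n))) s \<longrightarrow> F x = s"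
    and x: "x \<in> PiL M f"
  shows "Pi_fun M f x = F x"
proof -
  from x obtain a where a: "phi_conv_dec M f a" "is_glb (range a) x" unfolding PiL_def by auto
  then obtain s where "is_glb (range (\<lambda>n. f (a n))) s" unfolding phi_conv_dec_def by auto
  hence "\<exists>s a. phi_conv_dec M f a \<and> is_glb (range a) x \<and> is_glb (range (\<lambda>n. f (a n))) s" using a by blast
  hence "\<exists>a. phi_conv_dec M f a \<and> is_glb (range a) x \<and> is_glb (range (\<lambda>n. f (a n))) (Pi_fun M f x)"
    unfolding Pi_fun_def by (rule someI_ex)
  then show ?thesis using P by metis
qed

lemma Sigma_fun_eq:
  assumes P: "\<forall>a x s. phi_conv_inc M f a \<and> is_lub (range a) x \<and> is_lub (range (\<lambda>n. f (a n))) s \<longrightarrow> F x = s"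
    and x: "x \<in> SigmaL M f"
  shows "Sigma_fun M f x = F x"
proof -
  from x obtain a where a: "phi_conv_inc M f a" "is_lub (range a) x" unfolding SigmaL_def by auto
  then obtain s where "is_lub (range (\<lambda>n. f (a n))) s" unfolding phi_conv_inc_def by auto
  hence "\<exists>s a. phi_conv_inc M f a \<and> is_lub (range a) x \<and> is_lub (range (\<lambda>n. f (a n))) s" using a by blast
  hence "\<exists>a. phi_conv_inc M f a \<and> is_lub (range a) x \<and> is_lub (range (\<lambda>n. f (a n))) (Sigma_fun M f x)"
    unfolding Sigma_fun_def by (rule someI_ex)
  then show ?thesis using P by metis
qed

lemma step_ext_val:
  assumes "step_ext b M f"
  shows "valuation (step_dom b M f) (step_fun b M f)"
proof (cases b)
  case True
  then obtain F where F: "valuation (PiL M f) F"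
    "\<forall>a x s. phi_conv_dec M f a \<and> is_glb (range a) x \<and> is_glb (range (\<lambda>n. f (a n))) s \<longrightarrow> F x = s"
    using assms unfolding step_ext_def Pi_extendible_def by auto
  have "valuation (PiL M f) (Pi_fun M f)" using valuation_cong[OF F(1)] Pi_fun_eq[OF F(2)] by auto
  then show ?thesis using True unfolding step_dom_def step_fun_def by simp
next
  case False
  then obtain F where F: "valuation (SigmaL M f) F"
    "\<forall>a x s. phi_conv_inc M f a \<and> is_lub (range a) x \<and> is_lub (range (\<lambda>n. f (a n))) s \<longrightarrow> F x = s"
    using assms unfolding step_ext_def Sigma_extendible_def by auto
  have "valuation (SigmaL M f) (Sigma_fun M f)" using valuation_cong[OF F(1)] Sigma_fun_eq[OF F(2)] by auto
  then show ?thesis using False unfolding step_dom_def step_fun_def by simp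
qed

lemma step_incl:
  assumes "step_ext b M f"
  shows "M \<subseteq> step_dom b M f \<and> (\<forall>x\<in>M. step_fun b M f x = f x)"
proof (cases b)
  case True
  then obtain F where F: "valuation (PiL M f) F"
    "\<forall>a x s. phi_conv_dec M f a \<and> is_glb (range a) x \<and> is_glb (range (\<lambda>n. f (a n))) s \<longrightarrow> F x = s"
    using assms unfolding step_ext_def Pi_extendible_def by auto
  have c: "phi_conv_dec M f (\<lambda>n. x)" if "x \<in> M" for x
  proof -
    have "is_glb (range (\<lambda>n. x)) x" "is_glb (range (\<lambda>n. f x)) (f x)" by (rule glb_const)+
    then show ?thesis unfolding phi_conv_dec_def antimono_def using that by blast
  qed
  have inM: "x \<in> PiL M f" if "x \<in> M" for x unfolding PiL_def using c[OF that] glb_const[of x] by blast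
  have "Pi_fun M f x = f x" if "x \<in> M" for x
  proof -
    have "F x = f x" using F(2) c[OF that] glb_const[of x] glb_const[of "f x"] by blast
    then show ?thesis using Pi_fun_eq[OF F(2) inM[OF that]] by simp
  qed
  then show ?thesis using True inM unfolding step_dom_def step_fun_def by auto
next
  case False
  then obtain F where F: "valuation (SigmaL M f) F"
    "\<forall>a x s. phi_conv_inc M f a \<and> is_lub (range a) x \<and> is_lub (range (\<lambda>n. f (a n))) s \<longrightarrow> F x = s"
    using assms unfolding step_ext_def Sigma_extendible_def by auto
  have c: "phi_conv_inc M f (\<lambda>n. x)" if "x \<in> M" for x
  proof -
    have "is_lub (range (\<lambda>n. x)) x" "is_lub (range (\<lambda>n. f x)) (f x)" by (rule lub_const)+
    then show ?thesis unfolding phi_conv_inc_def mono_def using that by blast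
  qed
  have inM: "x \<in> SigmaL M f" if "x \<in> M" for x unfolding SigmaL_def using c[OF that] lub_const[of x] by blast
  have "Sigma_fun M f x = f x" if "x \<in> M" for x
  proof -
    have "F x = f x" using F(2) c[OF that] lub_const[of x] lub_const[of "f x"] by blast
    then show ?thesis using Sigma_fun_eq[OF F(2) inM[OF that]] by simp
  qed
  then show ?thesis using False inM unfolding step_dom_def step_fun_def by auto
qed

lemma step_mono:
  assumes ext: "step_ext b M' f'" and sub: "M \<subseteq> M'" and ag: "\<forall>x\<in>M. f x = f' x"
  shows "step_dom b M f \<subseteq> step_dom b M' f' \<and> (\<forall>x\<in>step_dom b M f. step_fun b M f x = step_fun b M' f' x)"
proof (cases b)
  case True
  then obtain F where F: "valuation (PiL M' f') F"
    "\<forall>a x s. phi_conv_dec M' f' a \<and> is_glb (range a) x \<and> is_glb (range (\<lambda>n. f' (a n))) s \<longrightarrow> F x = s"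
    using ext unfolding step_ext_def Pi_extendible_def by auto
  have P: "\<forall>a x s. phi_conv_dec M f a \<and> is_glb (range a) x \<and> is_glb (range (\<lambda>n. f (a n))) s \<longrightarrow> F x = s"
    using F(2) conv_dec_transfer[OF _ sub ag] by metis
  have S: "PiL M f \<subseteq> PiL M' f'" unfolding PiL_def using conv_dec_transfer[OF _ sub ag] by blast
  have "Pi_fun M f x = Pi_fun M' f' x" if "x \<in> PiL M f" for x
    using Pi_fun_eq[OF P that] Pi_fun_eq[OF F(2)] S that by auto
  then show ?thesis using True S unfolding step_dom_def step_fun_def by auto
next
  case False
  then obtain F where F: "valuation (SigmaL M' f') F"
    "\<forall>a x s. phi_conv_inc M' f' a \<and> is_lub (range a) x \<and> is_lub (range (\<lambda>n. f' (a n))) s \<longrightarrow> F x = s"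
    using ext unfolding step_ext_def Sigma_extendible_def by auto
  have P: "\<forall>a x s. phi_conv_inc M f a \<and> is_lub (range a) x \<and> is_lub (range (\<lambda>n. f (a n))) s \<longrightarrow> F x = s"
    using F(2) conv_inc_transfer[OF _ sub ag] by metis
  have S: "SigmaL M f \<subseteq> SigmaL M' f'" unfolding SigmaL_def using conv_inc_transfer[OF _ sub ag] by blast
  have "Sigma_fun M f x = Sigma_fun M' f' x" if "x \<in> SigmaL M f" for x
    using Sigma_fun_eq[OF P that] Sigma_fun_eq[OF F(2)] S that by auto
  then show ?thesis using False S unfolding step_dom_def step_fun_def by auto
qed

lemma step_ext_sub:
  fixes N :: "'v::lattice set" and g :: "'v \<Rightarrow> 'e::ordered_ab_group_add"
  assumes ext: "step_ext b M' f'" and val: "valuation N g" and sub: "N \<subseteq> M'" and ag: "\<forall>x\<in>N. g x = f' x"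
    and sd: "sigma_distributive TYPE('v)" and rc: "R_complete TYPE('e)"
  shows "step_ext b N g"
proof (cases b)
  case True
  then obtain F where F: "valuation (PiL M' f') F"
    "\<forall>a x s. phi_conv_dec M' f' a \<and> is_glb (range a) x \<and> is_glb (range (\<lambda>n. f' (a n))) s \<longrightarrow> F x = s"
    using ext unfolding step_ext_def Pi_extendible_def by auto
  have P: "\<forall>a x s. phi_conv_dec N g a \<and> is_glb (range a) x \<and> is_glb (range (\<lambda>n. g (a n))) s \<longrightarrow> F x = s"
    using F(2) conv_dec_transfer[OF _ sub ag] by metis
  have S: "PiL N g \<subseteq> PiL M' f'" unfolding PiL_def using conv_dec_transfer[OF _ sub ag] by blast
  have "valuation (PiL N g) F"
    by (rule valuation_subset[OF F(1) PiL_sublattice[OF sd rc val] S])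
  then show ?thesis using True P unfolding step_ext_def Pi_extendible_def by auto
next
  case False
  then obtain F where F: "valuation (SigmaL M' f') F"
    "\<forall>a x s. phi_conv_inc M' f' a \<and> is_lub (range a) x \<and> is_lub (range (\<lambda>n. f' (a n))) s \<longrightarrow> F x = s"
    using ext unfolding step_ext_def Sigma_extendible_def by auto
  have P: "\<forall>a x s. phi_conv_inc N g a \<and> is_lub (range a) x \<and> is_lub (range (\<lambda>n. g (a n))) s \<longrightarrow> F x = s"
    using F(2) conv_inc_transfer[OF _ sub ag] by metis
  have S: "SigmaL N g \<subseteq> SigmaL M' f'" unfolding SigmaL_def using conv_inc_transfer[OF _ sub ag] by blast
  have "valuation (SigmaL N g) F"
    by (rule valuation_subset[OF F(1) SigmaL_sublattice[OF sd rc val] S])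
  then show ?thesis using False P unfolding step_ext_def Sigma_extendible_def by auto
qed



lemma succ_unique: "is_succ_of b1 (a::'o::wellorder) \<Longrightarrow> is_succ_of b2 a \<Longrightarrow> b1 = b2"
  unfolding is_succ_of_def by (metis linorder_neqE not_le)

lemma zero_no_less: "is_zero (a::'o::wellorder) \<Longrightarrow> \<not> b < a"
  unfolding is_zero_def by (simp add: not_less)

lemma zero_not_succ: "is_zero (a::'o::wellorder) \<Longrightarrow> \<not> is_succ_of b a"
  unfolding is_succ_of_def using zero_no_less by blast

lemma succ_le: "is_succ_of d (g::'o::wellorder) \<Longrightarrow> b < g \<Longrightarrow> b \<le> d"
  unfolding is_succ_of_def by (meson not_le)

lemma succ_exists: "(b::'o::wellorder) < g \<Longrightarrow> \<exists>d. is_succ_of b d \<and> d \<le> g"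
proof -
  assume "b < g"
  define d where "d = (LEAST d. b < d)"
  have "b < d" unfolding d_def by (rule LeastI) fact
  moreover have "\<forall>c. b < c \<longrightarrow> d \<le> c" unfolding d_def by (auto intro: Least_le)
  ultimately show ?thesis using \<open>b < g\<close> unfolding is_succ_of_def by blast
qed

lemma limit_succ_less: "is_limit (g::'o::wellorder) \<Longrightarrow> b < g \<Longrightarrow> \<exists>d. is_succ_of b d \<and> d < g"
  using succ_exists unfolding is_limit_def by (metis order.not_eq_order_implies_strict)

lemma hier_zero: "hier L \<phi> b \<alpha> M f \<Longrightarrow> is_zero \<alpha> \<Longrightarrow> M = L \<and> f = \<phi>"
  by (erule hier.cases) (auto simp: zero_not_succ is_limit_def)

lemma hier_succ_inv:
  "hier L \<phi> b \<alpha> M f \<Longrightarrow> is_succ_of \<delta> \<alpha> \<Longrightarrow>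
    \<exists>M0 f0. M = step_dom b M0 f0 \<and> f = step_fun b M0 f0 \<and> hier L \<phi> (\<not> b) \<delta> M0 f0 \<and> step_ext b M0 f0"
  by (erule hier.cases) (auto simp: zero_not_succ is_limit_def dest: succ_unique)

lemma hier_limit_inv:
  "hier L \<phi> b \<alpha> M f \<Longrightarrow> is_limit \<alpha> \<Longrightarrow>
    \<exists>Ms fs. (\<forall>\<beta><\<alpha>. hier L \<phi> b \<beta> (Ms \<beta>) (fs \<beta>)) \<and> M = (\<Union>\<beta>\<in>{\<beta>. \<beta> < \<alpha>}. Ms \<beta>) \<and>
       (\<forall>\<beta><\<alpha>. \<forall>x\<in>Ms \<beta>. f x = fs \<beta> x)"
  by (erule hier.cases) (auto simp: is_limit_def)

lemma hier_chain:
  fixes \<gamma> :: "'o::wellorder"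
  shows "hier L \<phi> b' \<gamma> M' f' \<Longrightarrow> hier L \<phi> b \<beta> M f \<Longrightarrow> \<beta> < \<gamma> \<or> (\<beta> = \<gamma> \<and> b = b') \<Longrightarrow>
    M \<subseteq> M' \<and> (\<forall>x\<in>M. f x = f' x)"
proof (induction \<gamma> arbitrary: \<beta> b b' M f M' f' rule: less_induct)
  case (less \<gamma>)
  note IH = less.IH
  have hg: "hier L \<phi> b' \<gamma> M' f'" and hb: "hier L \<phi> b \<beta> M f" and cmp: "\<beta> < \<gamma> \<or> (\<beta> = \<gamma> \<and> b = b')"
    using less.prems by auto
  consider (z) "is_zero \<gamma>" | (s) \<delta> where "is_succ_of \<delta> \<gamma>" | (l) "is_limit \<gamma>"
    unfolding is_limit_def by blast
  then show ?case
  proof cases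
    case z
    then have "\<beta> = \<gamma>" using cmp zero_no_less by blast
    then show ?thesis using hier_zero[OF hg z] hier_zero[OF hb] z by auto
  next
    case s
    then have d\<gamma>: "\<delta> < \<gamma>" unfolding is_succ_of_def by auto
    obtain M0' f0' where M': "M' = step_dom b' M0' f0'" "f' = step_fun b' M0' f0'"
      and h0: "hier L \<phi> (\<not> b') \<delta> M0' f0'" and e0: "step_ext b' M0' f0'"
      using hier_succ_inv[OF hg s] by blast
    have inc0: "M0' \<subseteq> M' \<and> (\<forall>x\<in>M0'. f' x = f0' x)" using step_incl[OF e0] M' by simp
    show ?thesis
    proof (cases "\<beta> = \<gamma>")
      case True
      then have bb: "b = b'" using cmp by auto
      obtain M1 f1 where M1: "M = step_dom b M1 f1" "f = step_fun b M1 f1"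
        and h1: "hier L \<phi> (\<not> b) \<delta> M1 f1"
        using hier_succ_inv[OF hb[unfolded True] s] by blast
      have "M1 \<subseteq> M0' \<and> (\<forall>x\<in>M1. f1 x = f0' x)" using IH[OF d\<gamma> h0 h1] bb by auto
      then show ?thesis using step_mono[OF e0] M1 M' bb by blast
    next
      case False
      then have "\<beta> \<le> \<delta>" using cmp succ_le[OF s] by auto
      show ?thesis
      proof (cases "\<beta> < \<delta> \<or> (\<beta> = \<delta> \<and> b = (\<not> b'))")
        case True
        then have "M \<subseteq> M0' \<and> (\<forall>x\<in>M. f x = f0' x)" using IH[OF d\<gamma> h0 hb] by auto
        then show ?thesis using inc0 by auto
      next
        case False
        then have bd: "\<beta> = \<delta>" and bb: "b = b'" using \<open>\<beta> \<le> \<delta>\<close> by auto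
        consider (z2) "is_zero \<delta>" | (s2) \<epsilon> where "is_succ_of \<epsilon> \<delta>" | (l2) "is_limit \<delta>"
          unfolding is_limit_def by blast
        then show ?thesis
        proof cases
          case z2
          then have "M = L \<and> f = \<phi>" "M0' = L \<and> f0' = \<phi>"
            using hier_zero[OF hb] hier_zero[OF h0] bd by auto
          then show ?thesis using inc0 by auto
        next
          case s2
          then have e\<delta>: "\<epsilon> < \<delta>" unfolding is_succ_of_def by auto
          obtain M1 f1 where M1: "M = step_dom b M1 f1" "f = step_fun b M1 f1"
            and h1: "hier L \<phi> (\<not> b) \<epsilon> M1 f1"
            using hier_succ_inv[OF hb[unfolded bd] s2] by blast
          have "M1 \<subseteq> M0' \<and> (\<forall>x\<in>M1. f1 x = f0' x)" using IH[OF d\<gamma> h0 h1] e\<delta> by auto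
          then show ?thesis using step_mono[OF e0] M1 M' bb by blast
        next
          case l2
          obtain Ms fs where Ms: "\<forall>\<epsilon><\<delta>. hier L \<phi> b \<epsilon> (Ms \<epsilon>) (fs \<epsilon>)"
            "M = (\<Union>\<epsilon>\<in>{\<epsilon>. \<epsilon> < \<delta>}. Ms \<epsilon>)" "\<forall>\<epsilon><\<delta>. \<forall>x\<in>Ms \<epsilon>. f x = fs \<epsilon> x"
            using hier_limit_inv[OF hb[unfolded bd] l2] by blast
          have "Ms \<epsilon> \<subseteq> M0' \<and> (\<forall>x\<in>Ms \<epsilon>. fs \<epsilon> x = f0' x)" if "\<epsilon> < \<delta>" for \<epsilon>
            using IH[OF d\<gamma> h0, of b \<epsilon>] Ms(1) that by auto
          then show ?thesis using Ms(2,3) inc0 by fastforce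
        qed
      qed
    qed
  next
    case l
    obtain Ms' fs' where Ms': "\<forall>\<epsilon><\<gamma>. hier L \<phi> b' \<epsilon> (Ms' \<epsilon>) (fs' \<epsilon>)"
      "M' = (\<Union>\<epsilon>\<in>{\<epsilon>. \<epsilon> < \<gamma>}. Ms' \<epsilon>)" "\<forall>\<epsilon><\<gamma>. \<forall>x\<in>Ms' \<epsilon>. f' x = fs' \<epsilon> x"
      using hier_limit_inv[OF hg l] by blast
    show ?thesis
    proof (cases "\<beta> < \<gamma>")
      case True
      obtain \<delta> where \<delta>: "is_succ_of \<beta> \<delta>" "\<delta> < \<gamma>" using limit_succ_less[OF l True] by blast
      have "\<beta> < \<delta>" using \<delta>(1) unfolding is_succ_of_def by auto
      then have "M \<subseteq> Ms' \<delta> \<and> (\<forall>x\<in>M. f x = fs' \<delta> x)"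
        using IH[OF \<delta>(2) _ hb] Ms'(1) \<delta>(2) by auto
      then show ?thesis using Ms'(2,3) \<delta>(2) by fastforce
    next
      case False
      then have bg: "\<beta> = \<gamma>" and bb: "b = b'" using cmp by auto
      obtain Ms fs where Ms: "\<forall>\<epsilon><\<gamma>. hier L \<phi> b \<epsilon> (Ms \<epsilon>) (fs \<epsilon>)"
        "M = (\<Union>\<epsilon>\<in>{\<epsilon>. \<epsilon> < \<gamma>}. Ms \<epsilon>)" "\<forall>\<epsilon><\<gamma>. \<forall>x\<in>Ms \<epsilon>. f x = fs \<epsilon> x"
        using hier_limit_inv[OF hb[unfolded bg] l] by blast
      have "Ms \<epsilon> \<subseteq> Ms' \<epsilon> \<and> (\<forall>x\<in>Ms \<epsilon>. fs \<epsilon> x = fs' \<epsilon> x)" if "\<epsilon> < \<gamma>" for \<epsilon>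
        using IH[OF that, of b' "Ms' \<epsilon>" "fs' \<epsilon>" b \<epsilon>] Ms(1) Ms'(1) bb that by auto
      then show ?thesis using Ms(2,3) Ms'(2,3) by fastforce
    qed
  qed
qed



lemma hier_val:
  assumes v: "valuation L \<phi>"
  shows "hier L \<phi> b \<alpha> M f \<Longrightarrow> valuation M f"
proof (induction rule: hier.induct)
  case (zero \<alpha> b)
  then show ?case using v by simp
next
  case (succ \<beta> \<alpha> b M f)
  then show ?case using step_ext_val by blast
next
  case (limit \<alpha> b Ms fs M f)
  have com: "\<exists>\<beta><\<alpha>. x \<in> Ms \<beta> \<and> y \<in> Ms \<beta>" if xyM: "x \<in> M" "y \<in> M" for x y
  proof -
    obtain b1 b2 where b: "b1 < \<alpha>" "b2 < \<alpha>" "x \<in> Ms b1" "y \<in> Ms b2" using xyM limit.hyps(2) by auto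
    let ?m = "max b1 b2"
    have m: "?m < \<alpha>" using b by simp
    have hm: "hier L \<phi> b ?m (Ms ?m) (fs ?m)" using limit.IH m by blast
    have h1: "hier L \<phi> b b1 (Ms b1) (fs b1)" "hier L \<phi> b b2 (Ms b2) (fs b2)" using limit.IH b by blast+
    have c1: "b1 < ?m \<or> (b1 = ?m \<and> b = b)" "b2 < ?m \<or> (b2 = ?m \<and> b = b)"
      using max.cobounded1[of b1 b2] max.cobounded2[of b2 b1] by (auto simp: order.order_iff_strict)
    have "Ms b1 \<subseteq> Ms ?m" "Ms b2 \<subseteq> Ms ?m"
      using hier_chain[OF hm h1(1) c1(1)] hier_chain[OF hm h1(2) c1(2)] by auto
    then show ?thesis using b m by blast
  qed
  have sub: "\<beta> < \<alpha> \<Longrightarrow> Ms \<beta> \<subseteq> M" for \<beta> using limit.hyps(2) by auto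
  show ?case unfolding valuation_def sublattice_def
  proof (intro conjI ballI impI)
    fix x y assume xy: "x \<in> M" "y \<in> M"
    then obtain \<beta> where \<beta>: "\<beta> < \<alpha>" "x \<in> Ms \<beta>" "y \<in> Ms \<beta>" using com by blast
    have vb: "valuation (Ms \<beta>) (fs \<beta>)" using limit.IH \<beta>(1) by auto
    then have i: "inf x y \<in> Ms \<beta>" "sup x y \<in> Ms \<beta>" using \<beta> unfolding valuation_def sublattice_def by auto
    then show "inf x y \<in> M" "sup x y \<in> M" using sub[OF \<beta>(1)] by auto
    have eqs: "f x = fs \<beta> x" "f y = fs \<beta> y" "f (inf x y) = fs \<beta> (inf x y)" "f (sup x y) = fs \<beta> (sup x y)"
      using limit.hyps(3) \<beta> i by auto
    show "x \<le> y \<Longrightarrow> f x \<le> f y" using vb \<beta> eqs unfolding valuation_def by auto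
    show "f (inf x y) + f (sup x y) = f x + f y" using vb \<beta> eqs unfolding valuation_def by auto
  qed
qed

lemma main_aux:
  fixes L C :: "'v::lattice set"
    and \<phi> \<psi> :: "'v \<Rightarrow> 'e::ordered_ab_group_add"
    and \<alpha> :: "'o::wellorder"
  assumes vL: "valuation_system L \<phi>"
    and vC: "valuation_system C \<psi>"
    and ex: "extends C \<psi> L \<phi>"
  shows "((\<exists>M f. hier C \<psi> b \<alpha> M f) \<longrightarrow> (\<exists>N g. hier L \<phi> b \<alpha> N g)) \<and>
         (\<forall>M f N g. hier C \<psi> b \<alpha> M f \<longrightarrow> hier L \<phi> b \<alpha> N g \<longrightarrow> extends M f N g)"
proof (induction \<alpha> arbitrary: b rule: less_induct)
  case (less \<alpha>)
  note IH = less.IH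
  have sd: "sigma_distributive TYPE('v)" and rc: "R_complete TYPE('e)" and vl: "valuation L \<phi>"
    using vL unfolding valuation_system_def by auto
  consider (z) "is_zero \<alpha>" | (s) \<delta> where "is_succ_of \<delta> \<alpha>" | (l) "is_limit \<alpha>"
    unfolding is_limit_def by blast
  then show ?case
  proof cases
    case z
    have "hier L \<phi> b \<alpha> L \<phi>" by (rule hier.zero[OF z])
    moreover have "extends M f N g" if "hier C \<psi> b \<alpha> M f" "hier L \<phi> b \<alpha> N g" for M f N g
      using hier_zero[OF that(1) z] hier_zero[OF that(2) z] ex by simp
    ultimately show ?thesis by blast
  next
    case s
    then have d\<alpha>: "\<delta> < \<alpha>" unfolding is_succ_of_def by auto
    have A: "\<exists>N g. hier L \<phi> b \<alpha> N g" if hC: "hier C \<psi> b \<alpha> M f" for M f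
    proof -
      obtain M0 f0 where h0: "hier C \<psi> (\<not> b) \<delta> M0 f0" and e0: "step_ext b M0 f0"
        using hier_succ_inv[OF hC s] by blast
      obtain N0 g0 where hn: "hier L \<phi> (\<not> b) \<delta> N0 g0" using IH[OF d\<alpha>, of "\<not> b"] h0 by blast
      have "extends M0 f0 N0 g0" using IH[OF d\<alpha>, of "\<not> b"] h0 hn by blast
      then have "N0 \<subseteq> M0" "\<forall>x\<in>N0. g0 x = f0 x" unfolding extends_def by auto
      then have "step_ext b N0 g0" using step_ext_sub[OF e0 hier_val[OF vl hn] _ _ sd rc] by blast
      then show ?thesis using hier.succ[OF s hn] by blast
    qed
    have B: "extends M f N g" if hCL: "hier C \<psi> b \<alpha> M f" "hier L \<phi> b \<alpha> N g" for M f N g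
    proof -
      obtain M0 f0 where M0: "M = step_dom b M0 f0" "f = step_fun b M0 f0"
        and h0: "hier C \<psi> (\<not> b) \<delta> M0 f0" and e0: "step_ext b M0 f0"
        using hier_succ_inv[OF hCL(1) s] by blast
      obtain N0 g0 where N0: "N = step_dom b N0 g0" "g = step_fun b N0 g0"
        and hn: "hier L \<phi> (\<not> b) \<delta> N0 g0"
        using hier_succ_inv[OF hCL(2) s] by blast
      have "extends M0 f0 N0 g0" using IH[OF d\<alpha>, of "\<not> b"] h0 hn by blast
      then have "N0 \<subseteq> M0" "\<forall>x\<in>N0. g0 x = f0 x" unfolding extends_def by auto
      then have "step_dom b N0 g0 \<subseteq> step_dom b M0 f0 \<and> (\<forall>x\<in>step_dom b N0 g0. step_fun b N0 g0 x = step_fun b M0 f0 x)"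
        using step_mono[OF e0] by blast
      then show ?thesis unfolding extends_def M0 N0 by auto
    qed
    show ?thesis using A B by blast
  next
    case l
    have A: "\<exists>N g. hier L \<phi> b \<alpha> N g" if hC: "hier C \<psi> b \<alpha> M f" for M f
    proof -
      obtain Ms fs where Ms: "\<forall>\<beta><\<alpha>. hier C \<psi> b \<beta> (Ms \<beta>) (fs \<beta>)"
        "M = (\<Union>\<beta>\<in>{\<beta>. \<beta> < \<alpha>}. Ms \<beta>)" "\<forall>\<beta><\<alpha>. \<forall>x\<in>Ms \<beta>. f x = fs \<beta> x"
        using hier_limit_inv[OF hC l] by blast
      have "\<forall>\<beta>. \<exists>N g. \<beta> < \<alpha> \<longrightarrow> hier L \<phi> b \<beta> N g \<and> extends (Ms \<beta>) (fs \<beta>) N g"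
        using IH Ms(1) by blast
      then obtain Ns gs where Ns: "\<forall>\<beta><\<alpha>. hier L \<phi> b \<beta> (Ns \<beta>) (gs \<beta>) \<and> extends (Ms \<beta>) (fs \<beta>) (Ns \<beta>) (gs \<beta>)"
        by metis
      have "\<forall>\<beta><\<alpha>. \<forall>x\<in>Ns \<beta>. f x = gs \<beta> x" using Ns Ms(3) unfolding extends_def by fastforce
      then have "hier L \<phi> b \<alpha> (\<Union>\<beta>\<in>{\<beta>. \<beta> < \<alpha>}. Ns \<beta>) f"
        using hier.limit[OF l, where Ms=Ns and fs=gs and b=b] Ns by blast
      then show ?thesis by blast
    qed
    have B: "extends M f N g" if hCL: "hier C \<psi> b \<alpha> M f" "hier L \<phi> b \<alpha> N g" for M f N g
    proof -
      obtain Ms fs where Ms: "\<forall>\<beta><\<alpha>. hier C \<psi> b \<beta> (Ms \<beta>) (fs \<beta>)"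
        "M = (\<Union>\<beta>\<in>{\<beta>. \<beta> < \<alpha>}. Ms \<beta>)" "\<forall>\<beta><\<alpha>. \<forall>x\<in>Ms \<beta>. f x = fs \<beta> x"
        using hier_limit_inv[OF hCL(1) l] by blast
      obtain Ns gs where Ns: "\<forall>\<beta><\<alpha>. hier L \<phi> b \<beta> (Ns \<beta>) (gs \<beta>)"
        "N = (\<Union>\<beta>\<in>{\<beta>. \<beta> < \<alpha>}. Ns \<beta>)" "\<forall>\<beta><\<alpha>. \<forall>x\<in>Ns \<beta>. g x = gs \<beta> x"
        using hier_limit_inv[OF hCL(2) l] by blast
      have "extends (Ms \<beta>) (fs \<beta>) (Ns \<beta>) (gs \<beta>)" if "\<beta> < \<alpha>" for \<beta>
        using IH[OF that, of b] Ms(1) Ns(1) that by blast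
      then show ?thesis using Ms(2,3) Ns(2,3) unfolding extends_def by fastforce
    qed
    show ?thesis using A B by blast
  qed
qed

theorem lemma5p34:
  fixes L C :: "'v::lattice set"
    and \<phi> \<psi> :: "'v \<Rightarrow> 'e::ordered_ab_group_add"
    and \<alpha> :: "'o::wellorder"
  assumes "valuation_system L \<phi>"
    and "valuation_system C \<psi>"
    and "extends C \<psi> L \<phi>"
  shows "(Pi_alpha_extendible C \<psi> \<alpha> \<longrightarrow>
            Pi_alpha_extendible L \<phi> \<alpha> \<and>
            (\<forall>M f N g. hier C \<psi> True \<alpha> M f \<longrightarrow> hier L \<phi> True \<alpha> N g \<longrightarrow> extends M f N g))
       \<and> (Sigma_alpha_extendible C \<psi> \<alpha> \<longrightarrow>
            Sigma_alpha_extendible L \<phi> \<alpha> \<and>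
            (\<forall>M f N g. hier C \<psi> False \<alpha> M f \<longrightarrow> hier L \<phi> False \<alpha> N g \<longrightarrow> extends M f N g))"
  using main_aux[OF assms, where b=True] main_aux[OF assms, where b=False]
  unfolding Pi_alpha_extendible_def Sigma_alpha_extendible_def by blast

end
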